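(* Let $M,M'\in\mathrm{Mat}(2,\mathbb{Z})$ have the same trace and the same determinant, and suppose $\mathrm{mgcd}(M')=\mathrm{mgcd}(M)=1$. Then the toral endomorphisms defined by $M$ and $M'$ have the same local statistics on all lattices $L_n$, $n\in\mathbb{N}$.
   Context: For $M=\begin{pmatrix}a&b\\c&d\end{pmatrix}$, $\mathrm{mgcd}(M)=\gcd(b,c,d-a)\ge0$. $L_n=\{(\frac{k}{n},\frac{\ell}{n}):0\le k,\ell<n\}\subset\mathbb{T}^2=\mathbb{R}^2/\mathbb{Z}^2$, with integer matrices acting by multiplication mod $1$. Two integer matrices have the same local statistics on $L_n$ if the directed pseudo-graphs on $L_n$ they induce (vertices the points of $L_n$, a directed edge from $x$ to $Mx$) are isomorphic as graphs. *)

theory Defs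
  imports "HOL-Analysis.Analysis"
begin

definition mgcd :: "int^2^2 \<Rightarrow> int" where
  "mgcd M = gcd (gcd (M$1$2) (M$2$1)) (M$2$2 - M$1$1)"

text \<open>The lattice L_n: the point (k/n, l/n) of the torus is encoded by the integer pair (k,l).\<close>
definition lattice :: "nat \<Rightarrow> (int \<times> int) set" where
  "lattice n = {0..<int n} \<times> {0..<int n}"

text \<open>Action of M on L_n (multiplication mod 1, i.e. mod n on numerators).\<close>
definition lat_act :: "int^2^2 \<Rightarrow> nat \<Rightarrow> int \<times> int \<Rightarrow> int \<times> int" where
  "lat_act M n p = ((M$1$1 * fst p + M$1$2 * snd p) mod int n,
                    (M$2$1 * fst p + M$2$2 * snd p) mod int n)"

definition lat_edge :: "int^2^2 \<Rightarrow> nat \<Rightarrow> int \<times> int \<Rightarrow> int \<times> int \<Rightarrow> bool" where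
  "lat_edge M n x y \<longleftrightarrow> x \<in> lattice n \<and> y \<in> lattice n \<and> y = lat_act M n x"

definition same_local_stats :: "int^2^2 \<Rightarrow> int^2^2 \<Rightarrow> nat \<Rightarrow> bool" where
  "same_local_stats M M' n \<longleftrightarrow>
     (\<exists>f. bij_betw f (lattice n) (lattice n) \<and>
          (\<forall>x\<in>lattice n. \<forall>y\<in>lattice n. lat_edge M n x y \<longleftrightarrow> lat_edge M' n (f x) (f y)))"

end

theory Submission imports Defs "HOL-Number_Theory.Cong" begin

datatype m2 = M2 int int int int

fun mm :: "m2 \<Rightarrow> m2 \<Rightarrow> m2" where
 "mm (M2 a b c d) (M2 e f g h) = M2 (a*e+b*g) (a*f+b*h) (c*e+d*g) (c*f+d*h)"

fun app :: "m2 \<Rightarrow> int \<times> int \<Rightarrow> int \<times> int" where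
 "app (M2 a b c d) (x,y) = (a*x+b*y, c*x+d*y)"

fun sc :: "int \<Rightarrow> m2 \<Rightarrow> m2" where
 "sc s (M2 a b c d) = M2 (s*a) (s*b) (s*c) (s*d)"

definition pmod :: "int \<Rightarrow> int\<times>int \<Rightarrow> int\<times>int" where
 "pmod n v = (fst v mod n, snd v mod n)"

definition toM :: "int^2^2 \<Rightarrow> m2" where
 "toM M = M2 (M$1$1) (M$1$2) (M$2$1) (M$2$2)"

lemma mm_assoc: "mm (mm A B) C = mm A (mm B C)"
  by (cases A; cases B; cases C) (simp add: algebra_simps)

lemma app_mm: "app (mm A B) v = app A (app B v)"
  by (cases A; cases B; cases v) (simp add: algebra_simps)

lemma mm_sc1: "mm (sc s A) B = sc s (mm A B)"
  by (cases A; cases B) (simp add: algebra_simps)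
lemma mm_sc2: "mm A (sc s B) = sc s (mm A B)"
  by (cases A; cases B) (simp add: algebra_simps)
lemma sc_sc: "sc s (sc t A) = sc (s*t) A"
  by (cases A) (simp add: algebra_simps)
lemma mm_diag: "mm A (M2 s 0 0 s) = sc s A"
  by (cases A) (simp add: algebra_simps)
lemma sc_diag: "sc s (M2 t 0 0 t) = M2 (s*t) 0 0 (s*t)"
  by simp

lemma lin_mod: "(a*(x mod n) + b*(y mod n)) mod n = (a*x+b*y) mod (n::int)"
proof -
  have "(a*(x mod n) + b*(y mod n)) mod n = ((a*(x mod n)) mod n + (b*(y mod n)) mod n) mod n"
    by (rule mod_add_eq[symmetric])
  also have "\<dots> = ((a*x) mod n + (b*y) mod n) mod n" by (simp only: mod_mult_right_eq)
  also have "\<dots> = (a*x+b*y) mod n" by (rule mod_add_eq)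
  finally show ?thesis .
qed

lemma smod: "s mod n = 1 mod n \<Longrightarrow> (s*x) mod n = x mod (n::int)"
  by (metis mod_mult_left_eq mult_1)

lemma app_pmod: "pmod n (app A (pmod n v)) = pmod n (app A v)"
  by (cases A; cases v) (simp only: pmod_def app.simps fst_conv snd_conv lin_mod)

lemma app_diag: "[s = 1] (mod n) \<Longrightarrow> pmod n (app (M2 s 0 0 s) v) = pmod n v"
  apply (cases v)
  by (simp add: pmod_def cong_def smod)

lemma pmod_lat: "x \<in> lattice n \<Longrightarrow> pmod (int n) x = x"
  by (cases x) (auto simp: lattice_def pmod_def)

lemma pmod_in: "n > 0 \<Longrightarrow> pmod (int n) x \<in> lattice n"
  by (cases x) (auto simp: lattice_def pmod_def)

lemma lat_act_eq: "lat_act M n p = pmod (int n) (app (toM M) p)"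
  by (cases p) (simp add: lat_act_def pmod_def toM_def)

lemma iso:
  assumes n: "n > 0" and TM: "mm T (toM M) = mm (toM M') T"
    and L: "mm T' T = M2 s 0 0 s" and R: "mm T T' = M2 s 0 0 s"
    and s: "[s = 1] (mod int n)"
  shows "same_local_stats M M' n"
proof -
  define f where "f = (\<lambda>p. pmod (int n) (app T p))"
  define g where "g = (\<lambda>p. pmod (int n) (app T' p))"
  have gf: "g (f x) = x" if "x \<in> lattice n" for x
  proof -
    have "g (f x) = pmod (int n) (app (mm T' T) x)"
      unfolding f_def g_def by (simp add: app_pmod app_mm)
    also have "\<dots> = x" using L app_diag[OF s] pmod_lat[OF that] by simp
    finally show ?thesis .
  qed
  have fg: "f (g x) = x" if "x \<in> lattice n" for x
  proof -
    have "f (g x) = pmod (int n) (app (mm T T') x)"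
      unfolding f_def g_def by (simp add: app_pmod app_mm)
    also have "\<dots> = x" using R app_diag[OF s] pmod_lat[OF that] by simp
    finally show ?thesis .
  qed
  have fin: "f x \<in> lattice n" for x unfolding f_def using pmod_in[OF n] .
  have gin: "g x \<in> lattice n" for x unfolding g_def using pmod_in[OF n] .
  have bij: "bij_betw f (lattice n) (lattice n)"
    by (rule bij_betw_byWitness[where f'=g]) (auto simp: gf fg fin gin)
  have edge: "lat_edge M n x y \<longleftrightarrow> lat_edge M' n (f x) (f y)"
    if x: "x \<in> lattice n" and y: "y \<in> lattice n" for x y
  proof -
    have key: "pmod (int n) (app (toM M') (f x)) = f (lat_act M n x)"
      unfolding f_def lat_act_eq
      by (simp add: app_pmod app_mm[symmetric] TM)
    show ?thesis
    proof
      assume "lat_edge M n x y"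
      then have "y = lat_act M n x" by (simp add: lat_edge_def)
      then show "lat_edge M' n (f x) (f y)"
        using key fin by (simp add: lat_edge_def lat_act_eq)
    next
      assume "lat_edge M' n (f x) (f y)"
      then have "f y = f (lat_act M n x)" using key by (simp add: lat_edge_def lat_act_eq)
      then have "g (f y) = g (f (lat_act M n x))" by simp
      then show "lat_edge M n x y"
        using gf y gf[of "lat_act M n x"] x
        by (simp add: lat_edge_def lat_act_eq pmod_in[OF n])
    qed
  qed
  show ?thesis unfolding same_local_stats_def using bij edge by blast
qed


lemma prime_div_common:
  fixes q n :: int
  assumes "n \<noteq> 0" "\<not> coprime q n"
  shows "\<exists>p. prime p \<and> p dvd q \<and> p dvd n"
proof -
  have a: "gcd q n \<noteq> 0" using assms(1) by simp
  have b: "\<not> is_unit (gcd q n)" using assms(2) is_unit_gcd[of q n] by argo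
  obtain p where p: "p dvd gcd q n" "prime p" using prime_divisor_exists[OF a b] by blast
  have "p dvd q" using p(1) gcd_dvd1 dvd_trans by blast
  moreover have "p dvd n" using p(1) gcd_dvd2 dvd_trans by blast
  ultimately show ?thesis using p(2) by blast
qed

lemma dvd_prod_primes:
  fixes p :: int
  assumes "finite S" "\<forall>q\<in>S. prime q" "prime p"
  shows "p dvd prod id S \<longleftrightarrow> p \<in> S"
proof
  assume "p dvd prod id S"
  then obtain q where q: "q \<in> S" "p dvd q" using prime_dvd_prod_iff[OF assms(1,3)] by auto
  have "prime q" using assms(2) q(1) by blast
  then have "p = q" using primes_dvd_imp_eq[OF assms(3)] q(2) by blast
  then show "p \<in> S" using q(1) by simp
next
  assume "p \<in> S"
  then have "id p dvd prod id S" using dvd_prodI[OF assms(1)] by blast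
  then show "p dvd prod id S" by simp
qed

lemma exists_xy:
  fixes a b c d n :: int
  assumes n: "n > 0" and g: "gcd (gcd b c) (d - a) = 1"
  shows "\<exists>x y. coprime (x*(c*x+d*y) - y*(a*x+b*y)) n"
proof -
  define S1 where "S1 = {p \<in> prime_factors n. p dvd c \<and> \<not> p dvd b}"
  define S2 where "S2 = {p \<in> prime_factors n. \<not> p dvd c}"
  define X where "X = prod id S1"
  define Y where "Y = prod id S2"
  have f1: "finite S1" "finite S2" unfolding S1_def S2_def by auto
  have pr: "\<forall>q\<in>S1. prime q" "\<forall>q\<in>S2. prime q" unfolding S1_def S2_def by auto
  have dX: "p dvd X \<longleftrightarrow> p \<in> S1" if "prime p" for p
    unfolding X_def using dvd_prod_primes[OF f1(1) pr(1) that] .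
  have dY: "p dvd Y \<longleftrightarrow> p \<in> S2" if "prime p" for p
    unfolding Y_def using dvd_prod_primes[OF f1(2) pr(2) that] .
  have Qe: "X*(c*X+d*Y) - Y*(a*X+b*Y) = c*X^2 + (d-a)*X*Y - b*Y^2"
    by (simp add: algebra_simps power2_eq_square)
  have "coprime (X*(c*X+d*Y) - Y*(a*X+b*Y)) n"
  proof (rule ccontr)
    assume "\<not> ?thesis"
    then obtain p where p: "prime p" "p dvd c*X^2 + (d-a)*X*Y - b*Y^2" "p dvd n"
      using prime_div_common[of n] n Qe by auto
    have pf: "p \<in> prime_factors n" using p n by (simp add: in_prime_factors_iff)
    show False
    proof (cases "p dvd c")
      case False
      then have "p dvd Y" "\<not> p dvd X" using dY dX p pf by (auto simp: S1_def S2_def)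
      then have "p dvd Y*((d-a)*X - b*Y)" by simp
      moreover have "c*X^2 = (c*X^2 + (d-a)*X*Y - b*Y^2) - Y*((d-a)*X - b*Y)"
        by (simp add: algebra_simps power2_eq_square)
      ultimately have "p dvd c*X^2" using p(2) by (metis dvd_diff)
      then have "p dvd c \<or> p dvd X^2" using prime_dvd_mult_iff[OF p(1)] by blast
      then show False using False \<open>\<not> p dvd X\<close> prime_dvd_power[OF p(1)] by blast
    next
      case c: True
      show False
      proof (cases "p dvd b")
        case False
        then have "p dvd X" "\<not> p dvd Y" using dY dX p pf c by (auto simp: S1_def S2_def)
        then have "p dvd X*(c*X + (d-a)*Y)" by simp
        moreover have "b*Y^2 = X*(c*X + (d-a)*Y) - (c*X^2 + (d-a)*X*Y - b*Y^2)"
          by (simp add: algebra_simps power2_eq_square)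
        ultimately have "p dvd b*Y^2" using p(2) by (metis dvd_diff)
        then have "p dvd b \<or> p dvd Y^2" using prime_dvd_mult_iff[OF p(1)] by blast
        then show False using False \<open>\<not> p dvd Y\<close> prime_dvd_power[OF p(1)] by blast
      next
        case b: True
        have "\<not> p dvd X" "\<not> p dvd Y" using dY dX p pf c b by (auto simp: S1_def S2_def)
        have "p dvd c*X^2 - b*Y^2" using b c by simp
        moreover have "(d-a)*X*Y = (c*X^2 + (d-a)*X*Y - b*Y^2) - (c*X^2 - b*Y^2)"
          by (simp add: algebra_simps)
        ultimately have "p dvd (d-a)*X*Y" using p(2) by (metis dvd_diff)
        moreover have "\<not> p dvd (d-a)"
        proof
          assume "p dvd (d-a)"
          then have "p dvd gcd (gcd b c) (d-a)" using b c by simp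
          then have "p dvd 1" using g by simp
          then show False using p(1) not_prime_unit by blast
        qed
        ultimately show False using \<open>\<not> p dvd X\<close> \<open>\<not> p dvd Y\<close> prime_dvd_mult_iff[OF p(1)] by blast
      qed
    qed
  qed
  then show ?thesis by blast
qed


lemma diag_mm: "mm (M2 s 0 0 s) A = sc s A"
  by (cases A) simp

lemma conj_data:
  fixes M :: "int^2^2" and n :: nat
  assumes n: "n > 0" and g: "mgcd M = 1"
  shows "\<exists>P adjP q u. mm adjP (toM M) = mm (M2 0 (-det M) 1 (trace M)) adjP
     \<and> mm (toM M) P = mm P (M2 0 (-det M) 1 (trace M))
     \<and> mm adjP P = M2 q 0 0 q \<and> mm P adjP = M2 q 0 0 q \<and> [q*u = 1] (mod int n)"
proof -
  define a where "a = M$1$1"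
  define b where "b = M$1$2"
  define c where "c = M$2$1"
  define d where "d = M$2$2"
  have tM: "toM M = M2 a b c d" by (simp add: toM_def a_def b_def c_def d_def)
  have tr: "trace M = a + d" by (simp add: trace_def sum_2 a_def d_def)
  have dt: "det M = a*d - b*c" by (simp add: det_2 a_def b_def c_def d_def)
  have gg: "gcd (gcd b c) (d - a) = 1" using g unfolding mgcd_def a_def b_def c_def d_def .
  obtain x y where cp: "coprime (x*(c*x+d*y) - y*(a*x+b*y)) (int n)"
    using exists_xy[of "int n" b c d a, OF _ gg] n by auto
  define q where "q = x*(c*x+d*y) - y*(a*x+b*y)"
  obtain u where u: "[q*u = 1] (mod int n)" using cong_solve_coprime_int cp q_def by blast
  define P where "P = M2 x (a*x+b*y) y (c*x+d*y)"
  define adjP where "adjP = M2 (c*x+d*y) (-(a*x+b*y)) (-y) x"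
  have "mm adjP (toM M) = mm (M2 0 (-det M) 1 (trace M)) adjP"
    unfolding tM tr dt adjP_def by (simp add: algebra_simps)
  moreover have "mm (toM M) P = mm P (M2 0 (-det M) 1 (trace M))"
    unfolding tM tr dt P_def by (simp add: algebra_simps)
  moreover have "mm adjP P = M2 q 0 0 q" "mm P adjP = M2 q 0 0 q"
    unfolding q_def P_def adjP_def by (simp_all add: algebra_simps)
  ultimately show ?thesis using u by blast
qed

theorem corollary35:
  fixes M M' :: "int^2^2"
  assumes "trace M = trace M'" and "det M = det M'"
    and "mgcd M' = 1" and "mgcd M = 1"
  shows "\<forall>n::nat. n > 0 \<longrightarrow> same_local_stats M M' n"
proof (intro allI impI)
  fix n :: nat assume n: "n > 0"
  define C where "C = M2 0 (-det M) 1 (trace M)"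
  obtain P adjP q u where A: "mm adjP (toM M) = mm C adjP" "mm (toM M) P = mm P C"
     "mm adjP P = M2 q 0 0 q" "mm P adjP = M2 q 0 0 q" "[q*u = 1] (mod int n)"
    using conj_data[OF n assms(4)] unfolding C_def by blast
  obtain P' adjP' q' u' where B: "mm adjP' (toM M') = mm C adjP'" "mm (toM M') P' = mm P' C"
     "mm adjP' P' = M2 q' 0 0 q'" "mm P' adjP' = M2 q' 0 0 q'" "[q'*u' = 1] (mod int n)"
    using conj_data[OF n assms(3)] unfolding C_def assms(1,2) by blast
  define T where "T = sc u (mm P' adjP)"
  define T' where "T' = sc u' (mm P adjP')"
  define s where "s = (q*u)*(q'*u')"
  have TM: "mm T (toM M) = mm (toM M') T"
  proof -
    have "mm T (toM M) = sc u (mm P' (mm adjP (toM M)))" by (simp add: T_def mm_sc1 mm_assoc)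
    also have "\<dots> = sc u (mm (mm P' C) adjP)" by (simp add: A(1) mm_assoc)
    also have "\<dots> = sc u (mm (mm (toM M') P') adjP)" by (simp add: B(2))
    also have "\<dots> = mm (toM M') T" by (simp add: T_def mm_sc2 mm_assoc)
    finally show ?thesis .
  qed
  have L: "mm T' T = M2 s 0 0 s"
  proof -
    have "mm T' T = sc u (sc u' (mm P (mm (mm adjP' P') adjP)))"
      by (simp add: T_def T'_def mm_sc1 mm_sc2 mm_assoc)
    also have "\<dots> = sc u (sc u' (sc q' (mm P adjP)))" by (simp add: B(3) diag_mm mm_sc2)
    also have "\<dots> = M2 s 0 0 s" by (simp add: A(4) s_def algebra_simps)
    finally show ?thesis .
  qed
  have R: "mm T T' = M2 s 0 0 s"
  proof -
    have "mm T T' = sc u' (sc u (mm P' (mm (mm adjP P) adjP')))"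
      by (simp add: T_def T'_def mm_sc1 mm_sc2 mm_assoc)
    also have "\<dots> = sc u' (sc u (sc q (mm P' adjP')))" by (simp add: A(3) diag_mm mm_sc2)
    also have "\<dots> = M2 s 0 0 s" by (simp add: B(4) s_def algebra_simps)
    finally show ?thesis .
  qed
  have s: "[s = 1] (mod int n)" unfolding s_def using cong_mult[OF A(5) B(5)] by simp
  show "same_local_stats M M' n" by (rule iso[OF n TM L R s])
qed

end
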